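(* Let $M=\mathbb{S}^1\times[-\rho,\rho]$ carry a metric of the form $ds^2=d\sigma^2+f(\theta,\sigma)^2d\theta^2$, $f>0$ smooth, and suppose there are constants $\alpha>0$, $C\ge0$ with $R\ge-\alpha$ on $M$ and $|k_g|\le C$ on $\partial M$. Let $L$ be the minimum of the lengths of the two boundary components. Then the area $A(M)$ satisfies $$2\rho L e^{-2\rho(\alpha\rho+C)}\le A(M)\le 2\rho L e^{2\rho(\alpha\rho+C)}.$$
   Context: $R$ is the scalar curvature (twice the Gauss curvature) of the metric and $k_g$ the geodesic curvature of the boundary curves $\mathbb{S}^1\times\{\pm\rho\}$; $\theta\in[0,2\pi)$, $\sigma\in[-\rho,\rho]$. *)

theory Defs
  imports "HOL-Analysis.Analysis"
begin

text \<open>Points of the (universal cover of the) cylinder are pairs (theta, sigma).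
  A metric ds^2 = dsigma^2 + f(theta,sigma)^2 dtheta^2 is given by the
  function f :: real * real => real, 2pi-periodic in theta.\<close>

definition pd1 :: "(real \<times> real \<Rightarrow> real) \<Rightarrow> real \<times> real \<Rightarrow> real" where
  "pd1 g z = deriv (\<lambda>t. g (t, snd z)) (fst z)"

definition pd2 :: "(real \<times> real \<Rightarrow> real) \<Rightarrow> real \<times> real \<Rightarrow> real" where
  "pd2 g z = deriv (\<lambda>t. g (fst z, t)) (snd z)"

text \<open>C^k on a set U (meant for open U): partial derivatives of all orders up to k
  exist and are continuous.\<close>
fun Ck_on :: "nat \<Rightarrow> (real \<times> real) set \<Rightarrow> (real \<times> real \<Rightarrow> real) \<Rightarrow> bool" where
  "Ck_on 0 U g = continuous_on U g"
| "Ck_on (Suc k) U g =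
     (continuous_on U g \<and>
      (\<forall>z\<in>U. (\<lambda>t. g (t, snd z)) differentiable (at (fst z)) \<and>
              (\<lambda>t. g (fst z, t)) differentiable (at (snd z))) \<and>
      Ck_on k U (pd1 g) \<and> Ck_on k U (pd2 g))"

definition smooth_on :: "(real \<times> real) set \<Rightarrow> (real \<times> real \<Rightarrow> real) \<Rightarrow> bool" where
  "smooth_on U g \<longleftrightarrow> (\<forall>k. Ck_on k U g)"

definition smooth_on_strip :: "real \<Rightarrow> (real \<times> real \<Rightarrow> real) \<Rightarrow> bool" where
  "smooth_on_strip \<rho> g \<longleftrightarrow>
     (\<exists>U. open U \<and> UNIV \<times> {-\<rho>..\<rho>} \<subseteq> U \<and> smooth_on U g)"

text \<open>Scalar curvature (twice the Gauss curvature K = - f_sigma sigma / f).\<close>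
definition scal_curv :: "(real \<times> real \<Rightarrow> real) \<Rightarrow> real \<times> real \<Rightarrow> real" where
  "scal_curv f z = - 2 * pd2 (pd2 f) z / f z"

text \<open>Geodesic curvature of the curve sigma = const (parametrised in theta, unit normal
  d/dsigma): f_sigma / f. Only its absolute value is used, so the orientation
  convention on the boundary is immaterial.\<close>
definition geod_curv :: "(real \<times> real \<Rightarrow> real) \<Rightarrow> real \<times> real \<Rightarrow> real" where
  "geod_curv f z = pd2 f z / f z"

definition curve_length :: "(real \<times> real \<Rightarrow> real) \<Rightarrow> real \<Rightarrow> real" where
  "curve_length f s = integral {0..2*pi} (\<lambda>\<theta>. f (\<theta>, s))"

definition area :: "real \<Rightarrow> (real \<times> real \<Rightarrow> real) \<Rightarrow> real" where
  "area \<rho> f = integral ({0..2*pi} \<times> {-\<rho>..\<rho>}) f"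

end

theory Submission
  imports Defs
begin

lemma ode_bound:
  fixes h hd hdd :: "real \<Rightarrow> real" and \<rho> \<alpha> C s t :: real
  assumes rho: "\<rho> > 0" and alpha: "\<alpha> > 0" and C: "C \<ge> 0"
    and D: "\<And>t. t \<in> {-\<rho>..\<rho>} \<Longrightarrow> (h has_real_derivative hd t) (at t) \<and> (hd has_real_derivative hdd t) (at t) \<and> h t > 0 \<and> hdd t \<le> \<alpha>/2 * h t"
    and b1: "\<bar>hd \<rho> / h \<rho>\<bar> \<le> C" and b2: "\<bar>hd (-\<rho>) / h (-\<rho>)\<bar> \<le> C"
    and s: "s \<in> {-\<rho>, \<rho>}" and t: "t \<in> {-\<rho>..\<rho>}"
  shows "h t \<le> h s * exp (2 * \<rho> * (\<alpha> * \<rho> + C)) \<and> h s * exp (- 2 * \<rho> * (\<alpha> * \<rho> + C)) \<le> h t"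
proof -
  define w where "w = (\<lambda>t. hd t / h t)"
  define M where "M = \<alpha> * \<rho> + C"
  have wd: "((\<lambda>x. w x - \<alpha>/2 * x) has_real_derivative ((hdd x * h x - hd x * hd x) / (h x * h x) - \<alpha>/2)) (at x)"
    if "x \<in> {-\<rho>..\<rho>}" for x
    unfolding w_def using D[OF that]
    by (auto intro!: derivative_eq_intros DERIV_divide)
  have wle: "(hdd x * h x - hd x * hd x) / (h x * h x) - \<alpha>/2 \<le> 0" if "x \<in> {-\<rho>..\<rho>}" for x
  proof -
    from D[OF that] have hp: "h x > 0" and hdd: "hdd x \<le> \<alpha>/2 * h x" by auto
    have "(hdd x * h x - hd x * hd x) / (h x * h x) \<le> (hdd x * h x) / (h x * h x)"
      using hp by (intro divide_right_mono) auto
    also have "\<dots> = hdd x / h x" using hp by simp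
    also have "\<dots> \<le> \<alpha>/2" using hp hdd by (simp add: divide_le_eq mult.commute)
    finally show ?thesis by simp
  qed
  have wd': "\<exists>y. ((\<lambda>x. w x - \<alpha>/2 * x) has_real_derivative y) (at x) \<and> y \<le> 0" if "x \<in> {-\<rho>..\<rho>}" for x
    using wd[OF that] wle[OF that] by blast
  have wbound: "\<bar>w x\<bar> \<le> M" if x: "x \<in> {-\<rho>..\<rho>}" for x
  proof -
    have "w \<rho> - \<alpha>/2 * \<rho> \<le> w x - \<alpha>/2 * x"
      by (rule DERIV_nonpos_imp_nonincreasing[where f="\<lambda>x. w x - \<alpha>/2 * x"])
         (use x wd' in auto)
    moreover have "w x - \<alpha>/2 * x \<le> w (-\<rho>) - \<alpha>/2 * (-\<rho>)"
      by (rule DERIV_nonpos_imp_nonincreasing[where f="\<lambda>x. w x - \<alpha>/2 * x"])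
         (use x wd' rho in auto)
    moreover have "\<bar>w \<rho>\<bar> \<le> C" "\<bar>w (-\<rho>)\<bar> \<le> C" using b1 b2 by (auto simp: w_def)
    moreover have "\<alpha>*x \<le> \<alpha>*\<rho>" "\<alpha>*(-\<rho>) \<le> \<alpha>*x" using x alpha by (auto intro!: mult_left_mono) (metis mult_left_mono less_le mult_minus_right)
    ultimately show ?thesis unfolding M_def by (auto simp: abs_le_iff)
  qed
  define u where "u = (\<lambda>x. ln (h x))"
  have ud: "(u has_real_derivative w x) (at x)" if "x \<in> {-\<rho>..\<rho>}" for x
    unfolding u_def w_def using D[OF that]
    by (auto intro!: derivative_eq_intros simp: field_simps)
  have ud2: "\<exists>y. ((\<lambda>x. u x + M * x) has_real_derivative y) (at x) \<and> y \<ge> 0" if "x \<in> {-\<rho>..\<rho>}" for x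
    using wbound[OF that] by (auto intro!: exI derivative_eq_intros ud that simp: abs_le_iff)
  have m1: "u b - M * b \<le> u a - M * a" if "a \<le> b" "a \<in> {-\<rho>..\<rho>}" "b \<in> {-\<rho>..\<rho>}" for a b
    by (rule DERIV_nonpos_imp_nonincreasing[where f="\<lambda>x. u x - M * x"])
       (use that wbound in \<open>auto intro!: exI derivative_eq_intros ud simp: abs_le_iff\<close>)
  have m2: "u a + M * a \<le> u b + M * b" if "a \<le> b" "a \<in> {-\<rho>..\<rho>}" "b \<in> {-\<rho>..\<rho>}" for a b
    by (rule DERIV_nonneg_imp_nondecreasing[where f="\<lambda>x. u x + M * x"])
       (use that ud2 in auto)
  have M0: "M \<ge> 0" using alpha rho C by (simp add: M_def)
  have Mt: "M*t \<le> M*\<rho>" "-(M*\<rho>) \<le> M*t" using t M0 by (auto intro!: mult_left_mono) (metis mult_left_mono mult_minus_right)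
  have M2: "2*\<rho>*M = M*\<rho>+M*\<rho>" by simp
  have key: "u t \<le> u s + 2*\<rho>*M \<and> u s - 2*\<rho>*M \<le> u t"
  proof (cases "s = \<rho>")
    case True
    have "u \<rho> - M*\<rho> \<le> u t - M*t" "u t + M*t \<le> u \<rho> + M*\<rho>" using m1[of t \<rho>] m2[of t \<rho>] t rho by auto
    then show ?thesis unfolding True using Mt M2 by linarith
  next
    case False
    then have s': "s = -\<rho>" using s by auto
    have "u t - M*t \<le> u (-\<rho>) - M*(-\<rho>)" "u (-\<rho>) + M*(-\<rho>) \<le> u t + M*t" using m1[of "-\<rho>" t] m2[of "-\<rho>" t] t rho by auto
    then show ?thesis unfolding s' using Mt M2 by linarith
  qed
  have hs: "h s > 0" "h t > 0" using D s t rho by auto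
  have "h t = exp (u t)" "h s = exp (u s)" using hs by (auto simp: u_def)
  then show ?thesis using key unfolding M_def
    by (simp add: exp_add[symmetric] exp_diff[symmetric] del: exp_add)
qed
theorem lemma2p3:
  fixes f :: "real \<times> real \<Rightarrow> real" and \<rho> \<alpha> C L :: real
  assumes rho_pos: "\<rho> > 0"
    and smooth: "smooth_on_strip \<rho> f"
    and periodic: "\<And>\<theta> \<sigma>. f (\<theta> + 2*pi, \<sigma>) = f (\<theta>, \<sigma>)"
    and pos: "\<And>\<theta> \<sigma>. \<sigma> \<in> {-\<rho>..\<rho>} \<Longrightarrow> f (\<theta>, \<sigma>) > 0"
    and alpha: "\<alpha> > 0" and C: "C \<ge> 0"
    and curv: "\<And>\<theta> \<sigma>. \<sigma> \<in> {-\<rho>..\<rho>} \<Longrightarrow> scal_curv f (\<theta>, \<sigma>) \<ge> - \<alpha>"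
    and geod: "\<And>\<theta> \<sigma>. \<sigma> \<in> {-\<rho>, \<rho>} \<Longrightarrow> \<bar>geod_curv f (\<theta>, \<sigma>)\<bar> \<le> C"
    and L: "L = min (curve_length f (-\<rho>)) (curve_length f \<rho>)"
  shows "2 * \<rho> * L * exp (- 2 * \<rho> * (\<alpha> * \<rho> + C)) \<le> area \<rho> f
       \<and> area \<rho> f \<le> 2 * \<rho> * L * exp (2 * \<rho> * (\<alpha> * \<rho> + C))"
proof -
  obtain U where U: "open U" "UNIV \<times> {-\<rho>..\<rho>} \<subseteq> U" "smooth_on U f"
    using smooth unfolding smooth_on_strip_def by blast
  have "Ck_on (Suc (Suc 0)) U f" using U(3) unfolding smooth_on_def by blast
  then have cont: "continuous_on U f"
    and d1: "\<And>z. z \<in> U \<Longrightarrow> (\<lambda>t. f (fst z, t)) differentiable (at (snd z))"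
    and d2: "\<And>z. z \<in> U \<Longrightarrow> (\<lambda>t. pd2 f (fst z, t)) differentiable (at (snd z))"
    by auto
  define K where "K = 2 * \<rho> * (\<alpha> * \<rho> + C)"
  have pw: "f (\<theta>, \<sigma>) \<le> f (\<theta>, s) * exp K \<and> f (\<theta>, s) * exp (- K) \<le> f (\<theta>, \<sigma>)"
    if s: "s \<in> {-\<rho>, \<rho>}" and sg: "\<sigma> \<in> {-\<rho>..\<rho>}" for \<theta> s \<sigma>
  proof -
    have "f (\<theta>, \<sigma>) \<le> f (\<theta>, s) * exp (2 * \<rho> * (\<alpha> * \<rho> + C)) \<and> f (\<theta>, s) * exp (- 2 * \<rho> * (\<alpha> * \<rho> + C)) \<le> f (\<theta>, \<sigma>)"
    proof (rule ode_bound[where h="\<lambda>t. f (\<theta>, t)" and hd="\<lambda>t. pd2 f (\<theta>, t)" and hdd="\<lambda>t. pd2 (pd2 f) (\<theta>, t)", OF rho_pos alpha C _ _ _ s sg])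
      fix t assume t: "t \<in> {-\<rho>..\<rho>}"
      then have tU: "(\<theta>, t) \<in> U" using U(2) by auto
      have A: "((\<lambda>t. f (\<theta>, t)) has_real_derivative pd2 f (\<theta>, t)) (at t)"
        using d1[OF tU] by (simp add: pd2_def DERIV_deriv_iff_real_differentiable)
      have B: "((\<lambda>t. pd2 f (\<theta>, t)) has_real_derivative pd2 (pd2 f) (\<theta>, t)) (at t)"
        using d2[OF tU] by (simp add: pd2_def[of "pd2 f"] DERIV_deriv_iff_real_differentiable)
      have P: "f (\<theta>, t) > 0" using pos t by auto
      have "scal_curv f (\<theta>, t) \<ge> - \<alpha>" using curv t by auto
      then have "- 2 * pd2 (pd2 f) (\<theta>, t) / f (\<theta>, t) \<ge> - \<alpha>" by (simp add: scal_curv_def)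
      then have "- 2 * pd2 (pd2 f) (\<theta>, t) \<ge> - \<alpha> * f (\<theta>, t)" using P by (simp add: divide_le_eq)
      then have "pd2 (pd2 f) (\<theta>, t) \<le> \<alpha> / 2 * f (\<theta>, t)" by simp
      then show "((\<lambda>t. f (\<theta>, t)) has_real_derivative pd2 f (\<theta>, t)) (at t) \<and>
         ((\<lambda>t. pd2 f (\<theta>, t)) has_real_derivative pd2 (pd2 f) (\<theta>, t)) (at t) \<and>
         0 < f (\<theta>, t) \<and> pd2 (pd2 f) (\<theta>, t) \<le> \<alpha> / 2 * f (\<theta>, t)" using A B P by blast
    next
      show "\<bar>pd2 f (\<theta>, \<rho>) / f (\<theta>, \<rho>)\<bar> \<le> C" using geod[of \<rho> \<theta>] by (simp add: geod_curv_def)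
      show "\<bar>pd2 f (\<theta>, -\<rho>) / f (\<theta>, -\<rho>)\<bar> \<le> C" using geod[of "-\<rho>" \<theta>] by (simp add: geod_curv_def)
    qed
    then show ?thesis by (simp add: K_def)
  qed
  define R where "R = cbox (0::real, -\<rho>) (2*pi, \<rho>)"
  have R: "R = {0..2*pi} \<times> {-\<rho>..\<rho>}" unfolding R_def by (simp add: cbox_Pair_eq)
  have RU: "R \<subseteq> U" using R U(2) by auto
  have fint: "f integrable_on R" unfolding R_def
    by (rule integrable_continuous) (use cont RU R_def continuous_on_subset in blast)
  have lineU: "\<And>s \<theta>. s \<in> {-\<rho>, \<rho>} \<Longrightarrow> (\<theta>, s) \<in> U" using U(2) rho_pos by auto
  have gint: "integral R (\<lambda>z. c * f (fst z, s)) = 2 * \<rho> * c * curve_length f s"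
    and gi: "(\<lambda>z. c * f (fst z, s)) integrable_on R"
    if s: "s \<in> {-\<rho>, \<rho>}" for s c
  proof -
    have c1: "continuous_on UNIV (\<lambda>\<theta>. f (\<theta>, s))"
      by (rule continuous_on_compose2[OF cont, where f="\<lambda>\<theta>. (\<theta>, s)"])
         (use lineU s in \<open>auto intro!: continuous_intros\<close>)
    have cc: "continuous_on R (\<lambda>z. c * f (fst z, s))"
      by (rule continuous_on_subset[of UNIV], intro continuous_intros continuous_on_compose2[OF c1]) auto
    then show "(\<lambda>z. c * f (fst z, s)) integrable_on R" unfolding R_def by (rule integrable_continuous)
    have "integral R (\<lambda>z. c * f (fst z, s)) = integral (cbox 0 (2*pi)) (\<lambda>x. integral (cbox (-\<rho>) \<rho>) (\<lambda>y. c * f (x, s)))"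
      using integral_prod_continuous[of 0 "-\<rho>" "2*pi" \<rho> "\<lambda>z. c * f (fst z, s)"] cc unfolding R_def by simp
    also have "\<dots> = integral {0..2*pi} (\<lambda>x. (2*\<rho>*c) * f (x, s))"
      using rho_pos by (simp add: algebra_simps)
    also have "\<dots> = 2 * \<rho> * c * curve_length f s"
      by (simp add: curve_length_def)
    finally show "integral R (\<lambda>z. c * f (fst z, s)) = 2 * \<rho> * c * curve_length f s" .
  qed
  have up: "area \<rho> f \<le> 2 * \<rho> * exp K * curve_length f s" and lo: "2 * \<rho> * exp (-K) * curve_length f s \<le> area \<rho> f"
    if s: "s \<in> {-\<rho>, \<rho>}" for s
  proof -
    have "area \<rho> f = integral R f" by (simp add: area_def R)
    also have "\<dots> \<le> integral R (\<lambda>z. exp K * f (fst z, s))"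
      by (rule integral_le[OF fint gi[OF s]]) (use pw[OF s] R in \<open>auto simp: mult.commute\<close>)
    also have "\<dots> = 2 * \<rho> * exp K * curve_length f s" by (rule gint[OF s])
    finally show "area \<rho> f \<le> 2 * \<rho> * exp K * curve_length f s" .
    have "2 * \<rho> * exp (-K) * curve_length f s = integral R (\<lambda>z. exp (-K) * f (fst z, s))" by (rule gint[OF s, symmetric])
    also have "\<dots> \<le> integral R f"
      by (rule integral_le[OF gi[OF s] fint]) (use pw[OF s] R in \<open>auto simp: mult.commute\<close>)
    also have "\<dots> = area \<rho> f" by (simp add: area_def R)
    finally show "2 * \<rho> * exp (-K) * curve_length f s \<le> area \<rho> f" .
  qed
  have p1: "0 \<le> 2 * \<rho> * exp (-K)" "0 \<le> 2 * \<rho> * exp K" using rho_pos by auto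
  have "2 * \<rho> * exp (-K) * L \<le> area \<rho> f"
  proof -
    have "2 * \<rho> * exp (-K) * L \<le> 2 * \<rho> * exp (-K) * curve_length f (-\<rho>)"
      using p1 L by (intro mult_left_mono) auto
    then show ?thesis using lo[of "-\<rho>"] by simp
  qed
  moreover have "area \<rho> f \<le> 2 * \<rho> * exp K * L"
    using up[of "-\<rho>"] up[of \<rho>] L by (auto simp: min_def)
  ultimately show ?thesis unfolding K_def by (simp add: mult_ac)
qed

end
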